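(* Let $G(t)=\sum_{k=0}^\infty a_k\frac{t^{k+1}}{k+1}$ be a strictly increasing real analytic function with $a_0=1$, whose coefficients do not depend on $\alpha$, and such that $\ln_G(x):=G(\ln x)$ is continuous, strictly increasing and strictly concave on $(0,\infty)$. For $\alpha>1$ and probability distributions $p=(p_1,\dots,p_W)$ define $Z_{G,\alpha}(p):=\frac{\ln_G(\sum_{i=1}^W p_i^{\alpha})}{1-\alpha}$. Then $Z_{G,\alpha}$ is Schur concave: whenever $p$ and $r$ are probability distributions on $W$ points with $p\preceq r$, one has $Z_{G,\alpha}(p)\ge Z_{G,\alpha}(r)$.
   Context: Majorization: for $\mathbf a,\mathbf b\in\mathbb{R}^n$ with entries sorted in decreasing order $a_1\ge\dots\ge a_n$, $b_1\ge\dots\ge b_n$, one writes $\mathbf b\preceq\mathbf a$ (a majorizes b) if $\sum_{i=1}^k a_i\ge\sum_{i=1}^k b_i$ for $k=1,\dots,n-1$ and $\sum_{i=1}^n a_i=\sum_{i=1}^n b_i$. *)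

theory Defs
  imports "HOL-Analysis.Analysis"
begin

definition strictly_concave_on :: "real set \<Rightarrow> (real \<Rightarrow> real) \<Rightarrow> bool" where
  "strictly_concave_on S f \<longleftrightarrow> convex S \<and>
     (\<forall>x\<in>S. \<forall>y\<in>S. \<forall>t. x \<noteq> y \<and> 0 < t \<and> t < 1 \<longrightarrow>
        f (t * x + (1 - t) * y) > t * f x + (1 - t) * f y)"

text \<open>Vectors in R^n are lists of length n; sorting in decreasing order is
  rev (sort xs). majorized b a means b is majorized by a (a majorizes b).\<close>
definition majorized :: "real list \<Rightarrow> real list \<Rightarrow> bool" where
  "majorized b a \<longleftrightarrow> length a = length b \<and>
     (let a' = rev (sort a); b' = rev (sort b) in
        (\<forall>k\<in>{1..<length a}. sum_list (take k b') \<le> sum_list (take k a')) \<and>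
        sum_list a' = sum_list b')"

definition prob_dist :: "nat \<Rightarrow> real list \<Rightarrow> bool" where
  "prob_dist W p \<longleftrightarrow> length p = W \<and> (\<forall>x\<in>set p. 0 \<le> x) \<and> sum_list p = 1"

definition lnG :: "(real \<Rightarrow> real) \<Rightarrow> real \<Rightarrow> real" where
  "lnG G x = G (ln x)"

definition Z_G :: "(real \<Rightarrow> real) \<Rightarrow> real \<Rightarrow> real list \<Rightarrow> real" where
  "Z_G G \<alpha> p = lnG G (sum_list (map (\<lambda>x. x powr \<alpha>) p)) / (1 - \<alpha>)"

end

theory Submission
  imports Defs
begin

lemma tangent_powr:
  fixes x c \<alpha> :: real
  assumes "\<alpha> \<ge> 1" "x \<ge> 0" "c \<ge> 0"
  shows "x powr \<alpha> - c powr \<alpha> \<ge> (\<alpha> * c powr (\<alpha> - 1)) * (x - c)"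
proof (cases "c = 0")
  case True thus ?thesis using assms by simp
next
  case cpos: False
  show ?thesis
  proof (cases "x = 0")
    case True
    have "c powr (\<alpha> - 1) * c = c powr \<alpha>"
      using cpos assms by (simp add: powr_diff)
    hence "(\<alpha> * c powr (\<alpha> - 1)) * (x - c) = - \<alpha> * c powr \<alpha>" using True by (simp add: algebra_simps)
    moreover have "c powr \<alpha> \<le> \<alpha> * c powr \<alpha>" using assms by (simp add: mult_le_cancel_right1)
    ultimately show ?thesis using True assms by (simp add: mult.assoc)
  next
    case False
    show ?thesis
      apply (rule convex_on_imp_above_tangent[where A="{0<..}"])
      using False cpos assms
      apply (auto intro: powr_convex simp: interior_open)
      apply (rule has_field_derivative_at_within, rule has_real_derivative_powr)
      apply simp
      done
  qed
qed

lemma abel_ineq: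
  fixes d u :: "nat \<Rightarrow> real"
  assumes "n \<ge> 1"
    and dec: "\<And>i j. i \<le> j \<Longrightarrow> j < n \<Longrightarrow> d j \<le> d i"
    and pre: "\<And>k. k < n \<Longrightarrow> (\<Sum>i<k. u i) \<ge> 0"
  shows "(\<Sum>i<n. d i * u i) \<ge> d (n - 1) * (\<Sum>i<n. u i)"
  using assms
proof (induction n)
  case 0 thus ?case by simp
next
  case (Suc m)
  show ?case
  proof (cases "m = 0")
    case True thus ?thesis by simp
  next
    case False
    have ih: "(\<Sum>i<m. d i * u i) \<ge> d (m - 1) * (\<Sum>i<m. u i)"
      using Suc.IH Suc.prems False by auto
    have "d m \<le> d (m - 1)" using Suc.prems False by auto
    moreover have "(\<Sum>i<m. u i) \<ge> 0" using Suc.prems by auto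
    ultimately have "d (m - 1) * (\<Sum>i<m. u i) \<ge> d m * (\<Sum>i<m. u i)"
      by (simp add: mult_right_mono)
    thus ?thesis using ih by (simp add: algebra_simps)
  qed
qed

lemma sum_rev_sort: "sum_list (map f (rev (sort xs))) = sum_list (map (f::real\<Rightarrow>real) xs)"
proof -
  have "mset (rev (sort xs)) = mset xs" by simp
  thus ?thesis by (metis mset_map sum_mset_sum_list)
qed

lemma sum_list_nth_map: "sum_list (map f xs) = (\<Sum>i<length xs. (f::real\<Rightarrow>real) (xs ! i))"
  by (simp add: sum_list_sum_nth atLeast0LessThan)

lemma sum_take_nth: "k \<le> length xs \<Longrightarrow> sum_list (take k xs) = (\<Sum>i<k. (xs::real list) ! i)"
  by (simp add: sum_list_sum_nth atLeast0LessThan min_def)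

lemma rev_sort_dec: "i \<le> j \<Longrightarrow> j < length xs \<Longrightarrow> rev (sort xs) ! j \<le> rev (sort (xs::real list)) ! i"
  by (simp add: rev_nth sorted_nth_mono)

theorem mainTheorem7:
  fixes a :: "nat \<Rightarrow> real" and G :: "real \<Rightarrow> real"
    and \<alpha> :: real and W :: nat and p r :: "real list"
  assumes series: "\<And>t. (\<lambda>k. a k * t ^ (k + 1) / real (k + 1)) sums G t"
    and a0: "a 0 = 1"
    and G_incr: "strict_mono G"
    and lnG_cont: "continuous_on {0<..} (lnG G)"
    and lnG_incr: "strict_mono_on {0<..} (lnG G)"
    and lnG_conc: "strictly_concave_on {0<..} (lnG G)"
    and alpha: "\<alpha> > 1"
    and p: "prob_dist W p" and r: "prob_dist W r"
    and maj: "majorized p r"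
  shows "Z_G G \<alpha> p \<ge> Z_G G \<alpha> r"
proof -
  define x where "x = rev (sort r)"
  define y where "y = rev (sort p)"
  define f where "f = (\<lambda>t::real. t powr \<alpha>)"
  have lx: "length x = W" and ly: "length y = W" using p r by (auto simp: x_def y_def prob_dist_def)
  have Wpos: "W \<ge> 1" using p by (cases W) (auto simp: prob_dist_def)
  have nnx: "\<And>i. i < W \<Longrightarrow> x ! i \<ge> 0" using r lx unfolding x_def prob_dist_def
    by (metis nth_mem set_rev set_sort)
  have nny: "\<And>i. i < W \<Longrightarrow> y ! i \<ge> 0" using p ly unfolding y_def prob_dist_def
    by (metis nth_mem set_rev set_sort)
  have Sr: "sum_list (map f r) = (\<Sum>i<W. f (x ! i))"
    using sum_rev_sort[of f r] sum_list_nth_map[of f x] lx by (simp add: x_def)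
  have Sp: "sum_list (map f p) = (\<Sum>i<W. f (y ! i))"
    using sum_rev_sort[of f p] sum_list_nth_map[of f y] ly by (simp add: y_def)
  define d where "d = (\<lambda>i. \<alpha> * (y ! i) powr (\<alpha> - 1))"
  define u where "u = (\<lambda>i. x ! i - y ! i)"
  have tang: "(\<Sum>i<W. f (x ! i) - f (y ! i)) \<ge> (\<Sum>i<W. d i * u i)"
    by (rule sum_mono) (use alpha nnx nny tangent_powr in \<open>auto simp: f_def d_def u_def\<close>)
  have dec: "\<And>i j. i \<le> j \<Longrightarrow> j < W \<Longrightarrow> d j \<le> d i"
  proof -
    fix i j assume ij: "i \<le> j" "j < W"
    have "y ! j \<le> y ! i" using rev_sort_dec[of i j p] ij ly by (simp add: y_def)
    hence "(y ! j) powr (\<alpha> - 1) \<le> (y ! i) powr (\<alpha> - 1)"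
      using nny ij alpha by (intro powr_mono2) auto
    thus "d j \<le> d i" using alpha by (simp add: d_def)
  qed
  have pre: "\<And>k. k < W \<Longrightarrow> (\<Sum>i<k. u i) \<ge> 0"
  proof -
    fix k assume k: "k < W"
    show "(\<Sum>i<k. u i) \<ge> 0"
    proof (cases "k = 0")
      case False
      hence "sum_list (take k y) \<le> sum_list (take k x)"
        using maj k lx unfolding majorized_def x_def y_def Let_def by auto
      thus ?thesis using sum_take_nth[of k x] sum_take_nth[of k y] k lx ly
        by (simp add: u_def sum_subtractf)
    qed simp
  qed
  have tot: "(\<Sum>i<W. u i) = 0"
  proof -
    have "sum_list x = sum_list y"
      using maj unfolding majorized_def x_def y_def Let_def by auto
    thus ?thesis using sum_take_nth[of W x] sum_take_nth[of W y] lx ly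
      by (simp add: u_def sum_subtractf)
  qed
  have "(\<Sum>i<W. d i * u i) \<ge> 0"
    using abel_ineq[of W d u, OF Wpos dec pre] tot by simp
  hence le: "sum_list (map f p) \<le> sum_list (map f r)"
    using tang Sp Sr by (simp add: sum_subtractf)
  have pos: "sum_list (map f p) > 0"
  proof -
    have ex: "\<exists>z\<in>set p. z > 0"
    proof (rule ccontr)
      assume "\<not> ?thesis"
      hence "sum_list p \<le> 0" by (intro sum_list_nonpos) force
      thus False using p by (simp add: prob_dist_def)
    qed
    have gen: "\<And>zs::real list. (\<forall>t\<in>set zs. t \<ge> 0) \<Longrightarrow> (\<exists>z\<in>set zs. z > 0) \<Longrightarrow> sum_list zs > 0"
    proof -
      fix zs :: "real list"
      show "(\<forall>t\<in>set zs. t \<ge> 0) \<Longrightarrow> (\<exists>z\<in>set zs. z > 0) \<Longrightarrow> sum_list zs > 0"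
      proof (induction zs)
        case (Cons z zs)
        have "sum_list zs \<ge> 0" using Cons.prems by (intro sum_list_nonneg) auto
        thus ?case using Cons by (cases "z > 0") force+
      qed simp
    qed
    from ex obtain z where z: "z \<in> set p" "z > 0" by blast
    have "f z \<in> set (map f p)" using z by simp
    moreover have "f z > 0" using z by (simp add: f_def)
    ultimately have "\<exists>w\<in>set (map f p). w > 0" by blast
    moreover have "\<forall>t\<in>set (map f p). t \<ge> 0" by (simp add: f_def)
    ultimately show ?thesis using gen by blast
  qed
  have "lnG G (sum_list (map f p)) \<le> lnG G (sum_list (map f r))"
    using le pos by (intro strict_mono_on_leD[OF lnG_incr]) auto
  thus ?thesis unfolding Z_G_def f_def[symmetric] using alpha
    by (intro divide_right_mono_neg) auto
qed

end
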